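(* Let $\mathbb V$ be a $k$-module over a linear space $\mathbb W$ admitting a $\mu$-multiplicative basis $\mathfrak B=\{v_i\}_{i\in I}$ with respect to the basis $\mathfrak B'=\{w_j\}_{j\in J}$ of $\mathbb W$. Then $\mathbb V$ is minimal if and only if all elements of $I$ are connected to each other (i.e. $I/\sim$ consists of a single class).
   Context: Fix integers $n\ge 2$ and $1\le k\le n$ and an arbitrary field $\mathbb F$; $S_n$ denotes the symmetric group on $n$ letters. A $k$-module over a linear space $\mathbb W$ is an $\mathbb F$-vector space $\mathbb V$ (the dimensions of $\mathbb V$ and $\mathbb W$ are arbitrary, possibly infinite) together with, for every $\sigma\in S_n$, an $n$-linear map $\mathbb V^k\times\mathbb W^{n-k}\to\mathbb V$, $(x_1,\dots,x_k,y_{k+1},\dots,y_n)\mapsto[x_1,\dots,x_k,y_{k+1},\dots,y_n]_\sigma$ (interpreted as an $n$-ary bracket in which the $l$-th argument is placed in position $\sigma(l)$). A $k$-submodule of $\mathbb V$ is a linear subspace $U$ such that $[u,x_2,\dots,x_k,y_{k+1},\dots,y_n]_\sigma\in U$ for all $\sigma\in S_n$, $u\in U$, $x_l\in\mathbb V$, $y_l\in\mathbb W$. A basis $\mathfrak B=\{v_i\}_{i\in I}$ of $\mathbb V$ is multiplicative (with respect to a basis $\mathfrak B'=\{w_j\}_{j\in J}$ of $\mathbb W$) if for all $\sigma\in S_n$, $i_1,\dots,i_k\in I$, $j_{k+1},\dots,j_n\in J$, the element $[v_{i_1},\dots,v_{i_k},w_{j_{k+1}},\dots,w_{j_n}]_\sigma$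 lies in $\mathbb F v_r$ for some $r\in I$. A $k$-submodule $U$ admits a multiplicative basis inherited from $\mathfrak B$ if some subset of $\mathfrak B$ is a basis of $U$. $\mathbb V$ (with multiplicative basis $\mathfrak B$) is minimal if the only nonzero $k$-submodule of $\mathbb V$ admitting a multiplicative basis inherited from $\mathfrak B$ is $\mathbb V$ itself. Index machinery: let $\overline I=\{\overline i:i\in I\}$ and $\overline J=\{\overline j:j\in J\}$ be sets of new symbols disjoint from $I$ and $J$, with the convention $\overline{\overline x}=x$. For $\sigma\in S_n$, $i_1,\dots,i_k\in I$, $j_{k+1},\dots,j_n\in J$, let $a_\sigma(i_1,\dots,i_k,j_{k+1},\dots,j_n)=\emptyset$ if $[v_{i_1},\dots,v_{i_k},w_{j_{k+1}},\dots,w_{j_n}]_\sigma=0$ and $=\{r\}$ if this bracket is a nonzero element of $\mathbb F v_r$. For $i,i_2,\dots,i_k\in I$, $j_{k+1},\dots,j_n\in J$ let $b_\sigma(i,\overline i_2,\dots,\overline i_k,\overline j_{k+1},\dots,\overline j_n)=\{i'\in I: a_\sigma(i',i_2,\dots,i_k,j_{k+1},\dots,j_n)=\{i\}\}$. For $i\in I$, $X=(x_2,\dots,x_k)\in(I\,\dot\cup\,\overline I)^{k-1}$, $Y=(y_{k+1},\dots,y_n)\in(J\,\dot\cup\,\overline J)^{n-k}$ define $\mu(i,X,Y)\subseteq I$ by: $\mu(i,X,Y)=\bigcup_{\sigma\in S_n}a_\sigma(i,X,Y)$ if all $x_l\in I$ and all $y_l\in J$; $\mu(i,X,Y)=\bigcup_{\sigma\in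 S_n}b_\sigma(i,X,Y)$ if all $x_l\in\overline I$ and all $y_l\in\overline J$; and $\mu(i,X,Y)=\emptyset$ otherwise. For $\mathfrak A\subseteq I$ set $\phi(\mathfrak A,X,Y)=\bigcup_{i\in\mathfrak A}\mu(i,X,Y)$. $\mu$-multiplicativity: a multiplicative basis $\mathfrak B$ is $\mu$-multiplicative if whenever $i,i'\in I$ satisfy $i'\in\mu(i,X,Y)$ for some $X\in(I\,\dot\cup\,\overline I)^{k-1}$, $Y\in(J\,\dot\cup\,\overline J)^{n-k}$, then $v_{i'}$ belongs to the linear span of $\{[v_i,x_2,\dots,x_k,y_{k+1},\dots,y_n]_\sigma:\sigma\in S_n,\ x_l\in\mathbb V,\ y_l\in\mathbb W\}$. Connections: for distinct $i,i'\in I$, a connection from $i$ to $i'$ is a finite sequence $(X_1,Y_1,\dots,X_t,Y_t)$, $t\ge1$, with $X_m\in(I\,\dot\cup\,\overline I)^{k-1}$ and $Y_m\in(J\,\dot\cup\,\overline J)^{n-k}$, such that, setting $\mathfrak A_0=\{i\}$ and $\mathfrak A_m=\phi(\mathfrak A_{m-1},X_m,Y_m)$, one has $\mathfrak A_m\neq\emptyset$ for $1\le m\le t-1$ and $i'\in\mathfrak A_t$. We say $i$ is connected to $i'$ if such a connection exists; by convention every $i\in I$ is connected to itself. This relation, written $i\sim i'$, is an equivalence relation on $I$. *)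

theory Defs
  imports Complex_Main "HOL-Combinatorics.Permutations"
begin

text \<open>The field is a type 'f::field, V is the whole type 'v (scalar
multiplication scV) and W is the whole type 'w (scalar multiplication scW).
The family of brackets is br: for a permutation sg of {1..n}, br sg xs ys is
the bracket with V-arguments xs 1, ..., xs k and W-arguments ys (k+1), ..., ys n
(values of xs, ys outside these ranges are irrelevant).
An element of I disjoint-union I-bar is encoded as (i, b) with i in I, where
b = True means the barred copy; likewise for J.\<close>

definition is_kmodule ::
  "('f::field \<Rightarrow> 'v::ab_group_add \<Rightarrow> 'v) \<Rightarrow> ('f \<Rightarrow> 'w::ab_group_add \<Rightarrow> 'w) \<Rightarrow> nat \<Rightarrow> nat
   \<Rightarrow> ((nat \<Rightarrow> nat) \<Rightarrow> (nat \<Rightarrow> 'v) \<Rightarrow> (nat \<Rightarrow> 'w) \<Rightarrow> 'v) \<Rightarrow> bool" where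
  "is_kmodule scV scW n k br \<longleftrightarrow>
     vector_space scV \<and> vector_space scW \<and> 2 \<le> n \<and> 1 \<le> k \<and> k \<le> n \<and>
     (\<forall>sg. sg permutes {1..n} \<longrightarrow>
        (\<forall>xs xs' ys ys'. (\<forall>l\<in>{1..k}. xs l = xs' l) \<longrightarrow> (\<forall>l\<in>{k+1..n}. ys l = ys' l)
            \<longrightarrow> br sg xs ys = br sg xs' ys') \<and>
        (\<forall>l\<in>{1..k}. \<forall>xs ys. Vector_Spaces.linear scV scV (\<lambda>x. br sg (xs(l := x)) ys)) \<and>
        (\<forall>l\<in>{k+1..n}. \<forall>xs ys. Vector_Spaces.linear scW scV (\<lambda>y. br sg xs (ys(l := y)))))"

definition is_basis_family :: "('f::field \<Rightarrow> 'v::ab_group_add \<Rightarrow> 'v) \<Rightarrow> ('i \<Rightarrow> 'v) \<Rightarrow> 'i set \<Rightarrow> bool" where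
  "is_basis_family sc v I \<longleftrightarrow> inj_on v I \<and> \<not> module.dependent sc (v ` I) \<and> module.span sc (v ` I) = UNIV"

definition k_submodule ::
  "('f::field \<Rightarrow> 'v::ab_group_add \<Rightarrow> 'v) \<Rightarrow> nat \<Rightarrow> nat
   \<Rightarrow> ((nat \<Rightarrow> nat) \<Rightarrow> (nat \<Rightarrow> 'v) \<Rightarrow> (nat \<Rightarrow> 'w) \<Rightarrow> 'v) \<Rightarrow> 'v set \<Rightarrow> bool" where
  "k_submodule scV n k br U \<longleftrightarrow> module.subspace scV U \<and>
     (\<forall>sg. sg permutes {1..n} \<longrightarrow> (\<forall>u\<in>U. \<forall>xs ys. br sg (xs(1 := u)) ys \<in> U))"

definition is_multiplicative ::
  "('f::field \<Rightarrow> 'v::ab_group_add \<Rightarrow> 'v) \<Rightarrow> nat \<Rightarrow> nat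
   \<Rightarrow> ((nat \<Rightarrow> nat) \<Rightarrow> (nat \<Rightarrow> 'v) \<Rightarrow> (nat \<Rightarrow> 'w) \<Rightarrow> 'v)
   \<Rightarrow> ('i \<Rightarrow> 'v) \<Rightarrow> 'i set \<Rightarrow> ('j \<Rightarrow> 'w) \<Rightarrow> 'j set \<Rightarrow> bool" where
  "is_multiplicative scV n k br v I w J \<longleftrightarrow>
     (\<forall>sg is js. sg permutes {1..n} \<longrightarrow> (\<forall>l\<in>{1..k}. is l \<in> I) \<longrightarrow> (\<forall>l\<in>{k+1..n}. js l \<in> J) \<longrightarrow>
        (\<exists>r\<in>I. \<exists>c. br sg (v \<circ> is) (w \<circ> js) = scV c (v r)))"

definition inherits_basis :: "('f::field \<Rightarrow> 'v::ab_group_add \<Rightarrow> 'v) \<Rightarrow> ('i \<Rightarrow> 'v) \<Rightarrow> 'i set \<Rightarrow> 'v set \<Rightarrow> bool" where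
  "inherits_basis scV v I U \<longleftrightarrow> (\<exists>S\<subseteq>I. \<not> module.dependent scV (v ` S) \<and> module.span scV (v ` S) = U)"

definition is_minimal ::
  "('f::field \<Rightarrow> 'v::ab_group_add \<Rightarrow> 'v) \<Rightarrow> nat \<Rightarrow> nat
   \<Rightarrow> ((nat \<Rightarrow> nat) \<Rightarrow> (nat \<Rightarrow> 'v) \<Rightarrow> (nat \<Rightarrow> 'w) \<Rightarrow> 'v) \<Rightarrow> ('i \<Rightarrow> 'v) \<Rightarrow> 'i set \<Rightarrow> bool" where
  "is_minimal scV n k br v I \<longleftrightarrow>
     (\<forall>U. k_submodule scV n k br U \<and> U \<noteq> {0} \<and> inherits_basis scV v I U \<longrightarrow> U = UNIV)"

text \<open>a_sigma(i_1..i_k, j_(k+1)..j_n): empty if the bracket is 0, {r} if it is a nonzero element of F v_r.\<close>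
definition a_idx ::
  "('f::field \<Rightarrow> 'v::ab_group_add \<Rightarrow> 'v) \<Rightarrow> ((nat \<Rightarrow> nat) \<Rightarrow> (nat \<Rightarrow> 'v) \<Rightarrow> (nat \<Rightarrow> 'w) \<Rightarrow> 'v)
   \<Rightarrow> ('i \<Rightarrow> 'v) \<Rightarrow> 'i set \<Rightarrow> ('j \<Rightarrow> 'w) \<Rightarrow> (nat \<Rightarrow> nat) \<Rightarrow> (nat \<Rightarrow> 'i) \<Rightarrow> (nat \<Rightarrow> 'j) \<Rightarrow> 'i set" where
  "a_idx scV br v I w sg is js =
     {r\<in>I. br sg (v \<circ> is) (w \<circ> js) \<noteq> 0 \<and> (\<exists>c. br sg (v \<circ> is) (w \<circ> js) = scV c (v r))}"

text \<open>b_sigma(i, bar i_2..bar i_k, bar j_(k+1)..bar j_n) = { i' in I : a_sigma(i', i_2..i_k, j..) = {i} }.\<close>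
definition b_idx ::
  "('f::field \<Rightarrow> 'v::ab_group_add \<Rightarrow> 'v) \<Rightarrow> ((nat \<Rightarrow> nat) \<Rightarrow> (nat \<Rightarrow> 'v) \<Rightarrow> (nat \<Rightarrow> 'w) \<Rightarrow> 'v)
   \<Rightarrow> ('i \<Rightarrow> 'v) \<Rightarrow> 'i set \<Rightarrow> ('j \<Rightarrow> 'w) \<Rightarrow> (nat \<Rightarrow> nat) \<Rightarrow> 'i \<Rightarrow> (nat \<Rightarrow> 'i) \<Rightarrow> (nat \<Rightarrow> 'j) \<Rightarrow> 'i set" where
  "b_idx scV br v I w sg i is js = {i'\<in>I. a_idx scV br v I w sg (is(1 := i')) js = {i}}"

text \<open>mu(i, X, Y); X uses slots 2..k, Y uses slots k+1..n.\<close>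
definition mu_idx ::
  "('f::field \<Rightarrow> 'v::ab_group_add \<Rightarrow> 'v) \<Rightarrow> nat \<Rightarrow> nat \<Rightarrow> ((nat \<Rightarrow> nat) \<Rightarrow> (nat \<Rightarrow> 'v) \<Rightarrow> (nat \<Rightarrow> 'w) \<Rightarrow> 'v)
   \<Rightarrow> ('i \<Rightarrow> 'v) \<Rightarrow> 'i set \<Rightarrow> ('j \<Rightarrow> 'w) \<Rightarrow> 'i \<Rightarrow> (nat \<Rightarrow> 'i \<times> bool) \<Rightarrow> (nat \<Rightarrow> 'j \<times> bool) \<Rightarrow> 'i set" where
  "mu_idx scV n k br v I w i X Y =
     (if (\<forall>l\<in>{2..k}. \<not> snd (X l)) \<and> (\<forall>l\<in>{k+1..n}. \<not> snd (Y l))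
      then (\<Union>sg\<in>{sg. sg permutes {1..n}}. a_idx scV br v I w sg ((fst \<circ> X)(1 := i)) (fst \<circ> Y))
      else if (\<forall>l\<in>{2..k}. snd (X l)) \<and> (\<forall>l\<in>{k+1..n}. snd (Y l))
      then (\<Union>sg\<in>{sg. sg permutes {1..n}}. b_idx scV br v I w sg i (fst \<circ> X) (fst \<circ> Y))
      else {})"

definition phi_idx ::
  "('f::field \<Rightarrow> 'v::ab_group_add \<Rightarrow> 'v) \<Rightarrow> nat \<Rightarrow> nat \<Rightarrow> ((nat \<Rightarrow> nat) \<Rightarrow> (nat \<Rightarrow> 'v) \<Rightarrow> (nat \<Rightarrow> 'w) \<Rightarrow> 'v)
   \<Rightarrow> ('i \<Rightarrow> 'v) \<Rightarrow> 'i set \<Rightarrow> ('j \<Rightarrow> 'w) \<Rightarrow> 'i set \<Rightarrow> (nat \<Rightarrow> 'i \<times> bool) \<Rightarrow> (nat \<Rightarrow> 'j \<times> bool) \<Rightarrow> 'i set" where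
  "phi_idx scV n k br v I w A X Y = (\<Union>i\<in>A. mu_idx scV n k br v I w i X Y)"

text \<open>X in (I disjoint-union I-bar)^(k-1), Y in (J disjoint-union J-bar)^(n-k).\<close>
definition valid_XY :: "nat \<Rightarrow> nat \<Rightarrow> 'i set \<Rightarrow> 'j set \<Rightarrow> (nat \<Rightarrow> 'i \<times> bool) \<Rightarrow> (nat \<Rightarrow> 'j \<times> bool) \<Rightarrow> bool" where
  "valid_XY n k I J X Y \<longleftrightarrow> (\<forall>l\<in>{2..k}. fst (X l) \<in> I) \<and> (\<forall>l\<in>{k+1..n}. fst (Y l) \<in> J)"

definition is_mu_multiplicative ::
  "('f::field \<Rightarrow> 'v::ab_group_add \<Rightarrow> 'v) \<Rightarrow> nat \<Rightarrow> nat \<Rightarrow> ((nat \<Rightarrow> nat) \<Rightarrow> (nat \<Rightarrow> 'v) \<Rightarrow> (nat \<Rightarrow> 'w) \<Rightarrow> 'v)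
   \<Rightarrow> ('i \<Rightarrow> 'v) \<Rightarrow> 'i set \<Rightarrow> ('j \<Rightarrow> 'w::ab_group_add) \<Rightarrow> 'j set \<Rightarrow> bool" where
  "is_mu_multiplicative scV n k br v I w J \<longleftrightarrow>
     is_multiplicative scV n k br v I w J \<and>
     (\<forall>i\<in>I. \<forall>i'\<in>I. \<forall>X Y. valid_XY n k I J X Y \<longrightarrow> i' \<in> mu_idx scV n k br v I w i X Y \<longrightarrow>
        v i' \<in> module.span scV {br sg (xs(1 := v i)) ys | sg xs ys. sg permutes {1..n}})"

definition conn_sets ::
  "('f::field \<Rightarrow> 'v::ab_group_add \<Rightarrow> 'v) \<Rightarrow> nat \<Rightarrow> nat \<Rightarrow> ((nat \<Rightarrow> nat) \<Rightarrow> (nat \<Rightarrow> 'v) \<Rightarrow> (nat \<Rightarrow> 'w) \<Rightarrow> 'v)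
   \<Rightarrow> ('i \<Rightarrow> 'v) \<Rightarrow> 'i set \<Rightarrow> ('j \<Rightarrow> 'w) \<Rightarrow> 'i set \<Rightarrow> ((nat \<Rightarrow> 'i \<times> bool) \<times> (nat \<Rightarrow> 'j \<times> bool)) list \<Rightarrow> 'i set" where
  "conn_sets scV n k br v I w A0 seq = foldl (\<lambda>A (X, Y). phi_idx scV n k br v I w A X Y) A0 seq"

definition connected_idx ::
  "('f::field \<Rightarrow> 'v::ab_group_add \<Rightarrow> 'v) \<Rightarrow> nat \<Rightarrow> nat \<Rightarrow> ((nat \<Rightarrow> nat) \<Rightarrow> (nat \<Rightarrow> 'v) \<Rightarrow> (nat \<Rightarrow> 'w) \<Rightarrow> 'v)
   \<Rightarrow> ('i \<Rightarrow> 'v) \<Rightarrow> 'i set \<Rightarrow> ('j \<Rightarrow> 'w) \<Rightarrow> 'j set \<Rightarrow> 'i \<Rightarrow> 'i \<Rightarrow> bool" where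
  "connected_idx scV n k br v I w J i i' \<longleftrightarrow> i = i' \<or>
     (\<exists>seq. seq \<noteq> [] \<and> (\<forall>(X, Y)\<in>set seq. valid_XY n k I J X Y) \<and>
        (\<forall>m. 1 \<le> m \<and> m < length seq \<longrightarrow> conn_sets scV n k br v I w {i} (take m seq) \<noteq> {}) \<and>
        i' \<in> conn_sets scV n k br v I w {i} seq)"

end

theory Submission
  imports Defs
begin

lemma lin_vimage:
  assumes "Vector_Spaces.linear s1 s2 f" "module.subspace s2 T"
  shows "module.subspace s1 {x. f x \<in> T}"
proof -
  have "module_hom s1 s2 f" using assms(1) by (simp add: module_hom_iff_linear)
  from module_hom.subspace_vimage[OF this assms(2)] show ?thesis by (simp add: vimage_def)
qed

lemma conn_step:
  assumes "connected_idx scV n k br v I w J i i1"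
    and "valid_XY n k I J X Y"
    and "r \<in> mu_idx scV n k br v I w i1 X Y"
  shows "connected_idx scV n k br v I w J i r"
proof (cases "i = i1")
  case True
  show ?thesis unfolding connected_idx_def
    apply (rule disjI2)
    apply (rule exI[of _ "[(X,Y)]"])
    using assms True by (auto simp: conn_sets_def phi_idx_def)
next
  case False
  then obtain seq where s: "seq \<noteq> []" "\<forall>(X, Y)\<in>set seq. valid_XY n k I J X Y"
    "\<forall>m. 1 \<le> m \<and> m < length seq \<longrightarrow> conn_sets scV n k br v I w {i} (take m seq) \<noteq> {}"
    "i1 \<in> conn_sets scV n k br v I w {i} seq"
    using assms(1) unfolding connected_idx_def by blast
  show ?thesis unfolding connected_idx_def
  proof (rule disjI2, rule exI[of _ "seq @ [(X,Y)]"], intro conjI allI impI)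
    show "seq @ [(X, Y)] \<noteq> []" by simp
    show "\<forall>(X, Y)\<in>set (seq @ [(X, Y)]). valid_XY n k I J X Y" using s(2) assms(2) by auto
    fix m assume m: "1 \<le> m \<and> m < length (seq @ [(X, Y)])"
    show "conn_sets scV n k br v I w {i} (take m (seq @ [(X, Y)])) \<noteq> {}"
    proof (cases "m < length seq")
      case True thus ?thesis using s(3) m by simp
    next
      case False
      then have "m = length seq" using m by simp
      thus ?thesis using s(4) by auto
    qed
  next
    show "r \<in> conn_sets scV n k br v I w {i} (seq @ [(X, Y)])"
      using s(4) assms(3) by (auto simp: conn_sets_def phi_idx_def)
  qed
qed

lemma foldl_inv:
  assumes "A \<subseteq> I" "\<forall>a\<in>A. P a"
    and "\<And>A X Y. A \<subseteq> I \<Longrightarrow> \<forall>a\<in>A. P a \<Longrightarrow> valid_XY n k I J X Y \<Longrightarrow>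
           phi_idx scV n k br v I w A X Y \<subseteq> I \<and> (\<forall>a\<in>phi_idx scV n k br v I w A X Y. P a)"
    and "\<forall>(X, Y)\<in>set seq. valid_XY n k I J X Y"
  shows "conn_sets scV n k br v I w A seq \<subseteq> I \<and> (\<forall>a\<in>conn_sets scV n k br v I w A seq. P a)"
  using assms
proof (induction seq arbitrary: A)
  case Nil thus ?case by (simp add: conn_sets_def)
next
  case (Cons p seq)
  obtain X Y where p: "p = (X, Y)" by (cases p)
  have "phi_idx scV n k br v I w A X Y \<subseteq> I \<and> (\<forall>a\<in>phi_idx scV n k br v I w A X Y. P a)"
    using Cons.prems p by auto
  then have "conn_sets scV n k br v I w (phi_idx scV n k br v I w A X Y) seq \<subseteq> I \<and>
     (\<forall>a\<in>conn_sets scV n k br v I w (phi_idx scV n k br v I w A X Y) seq. P a)"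
    using Cons.IH[of "phi_idx scV n k br v I w A X Y"] Cons.prems by auto
  thus ?case using p by (simp add: conn_sets_def)
qed

lemma mu_sub: "mu_idx scV n k br v I w i X Y \<subseteq> I"
  unfolding mu_idx_def a_idx_def b_idx_def by auto

theorem mainTheorem9:
  fixes scV :: "'f::field \<Rightarrow> 'v::ab_group_add \<Rightarrow> 'v"
    and scW :: "'f \<Rightarrow> 'w::ab_group_add \<Rightarrow> 'w"
    and n k :: nat
    and br :: "(nat \<Rightarrow> nat) \<Rightarrow> (nat \<Rightarrow> 'v) \<Rightarrow> (nat \<Rightarrow> 'w) \<Rightarrow> 'v"
    and v :: "'i \<Rightarrow> 'v" and I :: "'i set"
    and w :: "'j \<Rightarrow> 'w" and J :: "'j set"
  assumes "is_kmodule scV scW n k br"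
    and "is_basis_family scV v I"
    and "is_basis_family scW w J"
    and "is_mu_multiplicative scV n k br v I w J"
  shows "is_minimal scV n k br v I \<longleftrightarrow>
         (\<forall>i\<in>I. \<forall>i'\<in>I. connected_idx scV n k br v I w J i i')"
proof -
  have km: "vector_space scV" "vector_space scW" "2 \<le> n" "1 \<le> k" "k \<le> n"
    and kmsg: "\<And>sg. sg permutes {1..n} \<Longrightarrow>
        (\<forall>xs xs' ys ys'. (\<forall>l\<in>{1..k}. xs l = xs' l) \<longrightarrow> (\<forall>l\<in>{k+1..n}. ys l = ys' l)
            \<longrightarrow> br sg xs ys = br sg xs' ys') \<and>
        (\<forall>l\<in>{1..k}. \<forall>xs ys. Vector_Spaces.linear scV scV (\<lambda>x. br sg (xs(l := x)) ys)) \<and>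
        (\<forall>l\<in>{k+1..n}. \<forall>xs ys. Vector_Spaces.linear scW scV (\<lambda>y. br sg xs (ys(l := y))))"
    using assms(1) unfolding is_kmodule_def by blast+
  interpret V: vector_space scV by (rule km(1))
  interpret W: vector_space scW by (rule km(2))
  have vinj: "inj_on v I" and vind: "\<not> V.dependent (v ` I)" and vspan: "V.span (v ` I) = UNIV"
    using assms(2) unfolding is_basis_family_def by auto
  have wspan: "W.span (w ` J) = UNIV"
    using assms(3) unfolding is_basis_family_def by auto
  have mult: "is_multiplicative scV n k br v I w J"
   and mumul: "\<forall>i\<in>I. \<forall>i'\<in>I. \<forall>X Y. valid_XY n k I J X Y \<longrightarrow> i' \<in> mu_idx scV n k br v I w i X Y \<longrightarrow>
        v i' \<in> V.span {br sg (xs(1 := v i)) ys | sg xs ys. sg permutes {1..n}}"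
    using assms(4) unfolding is_mu_multiplicative_def by auto
  have in_span: "i' \<in> S" if "S \<subseteq> I" "i' \<in> I" "v i' \<in> V.span (v ` S)" for S i'
  proof (rule ccontr)
    assume "i' \<notin> S"
    then have "v ` S \<subseteq> v ` I - {v i'}" using that vinj by (auto simp: inj_on_def)
    then have "v i' \<in> V.span (v ` I - {v i'})" using that(3) V.span_mono by blast
    then have "V.dependent (v ` I)" using that(2) unfolding V.dependent_def by blast
    thus False using vind by simp
  qed
  show ?thesis
  proof
    assume minl: "is_minimal scV n k br v I"
    show "\<forall>i\<in>I. \<forall>i'\<in>I. connected_idx scV n k br v I w J i i'"
    proof (intro ballI)
      fix i i' assume iI: "i \<in> I" and i'I: "i' \<in> I"
      define S where "S = {x\<in>I. connected_idx scV n k br v I w J i x}"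
      define U where "U = V.span (v ` S)"
      have SI: "S \<subseteq> I" unfolding S_def by auto
      have iS: "i \<in> S" unfolding S_def connected_idx_def using iI by auto
      have Usub: "V.subspace U" unfolding U_def by simp
      have base: "br sg xs ys \<in> U" if sg: "sg permutes {1..n}" and x1: "xs 1 \<in> v ` S"
        and xl: "\<forall>l\<in>{2..k}. xs l \<in> v ` I" and yl: "\<forall>l\<in>{k+1..n}. ys l \<in> w ` J" for sg xs ys
      proof -
        obtain i1 where i1: "i1 \<in> S" "xs 1 = v i1" using x1 by auto
        define ixs where "ixs = (\<lambda>l. if l = 1 then i1 else inv_into I v (xs l))"
        define js where "js = (\<lambda>l. inv_into J w (ys l))"
        have isI: "\<forall>l\<in>{1..k}. ixs l \<in> I"
          using xl i1 SI unfolding ixs_def by (auto intro: inv_into_into)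
        have jsJ: "\<forall>l\<in>{k+1..n}. js l \<in> J"
          using yl unfolding js_def by (auto intro: inv_into_into)
        have "\<forall>l\<in>{1..k}. xs l = (v \<circ> ixs) l"
          using xl i1 unfolding ixs_def by (auto simp: f_inv_into_f)
        moreover have "\<forall>l\<in>{k+1..n}. ys l = (w \<circ> js) l"
          using yl unfolding js_def by (auto simp: f_inv_into_f)
        ultimately have eq: "br sg xs ys = br sg (v \<circ> ixs) (w \<circ> js)"
          using kmsg[OF sg] by blast
        obtain r c where r: "r \<in> I" "br sg (v \<circ> ixs) (w \<circ> js) = scV c (v r)"
          using mult sg isI jsJ unfolding is_multiplicative_def by blast
        show ?thesis
        proof (cases "scV c (v r) = 0")
          case True thus ?thesis using eq r V.subspace_0[OF Usub] by metis
        next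
          case False
          define X where "X = (\<lambda>l. (ixs l, False))"
          define Y where "Y = (\<lambda>l. (js l, False))"
          have fx: "(fst \<circ> X)(1 := i1) = ixs" unfolding X_def ixs_def by auto
          have fy: "fst \<circ> Y = js" unfolding Y_def by auto
          have "r \<in> a_idx scV br v I w sg ixs js"
            unfolding a_idx_def using r False by auto
          then have rmu: "r \<in> mu_idx scV n k br v I w i1 X Y"
            unfolding mu_idx_def using fx fy sg by (auto simp: X_def Y_def)
          have val: "valid_XY n k I J X Y"
            unfolding valid_XY_def X_def Y_def using isI jsJ by auto
          have "connected_idx scV n k br v I w J i i1" using i1 unfolding S_def by auto
          from conn_step[OF this val rmu] have "r \<in> S" unfolding S_def using r by auto
          then have "v r \<in> U" unfolding U_def by (simp add: V.span_base)
          then show ?thesis using eq r V.subspace_scale[OF Usub] by simp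
        qed
      qed
      have ind: "\<forall>xs ys. xs 1 \<in> v ` S \<longrightarrow> (\<forall>l\<in>{2..k}. m < l \<longrightarrow> xs l \<in> v ` I)
          \<longrightarrow> (\<forall>l\<in>{k+1..n}. m < l \<longrightarrow> ys l \<in> w ` J) \<longrightarrow> br sg xs ys \<in> U"
        if sg: "sg permutes {1..n}" for sg m
      proof (induction m)
        case 0
        then show ?case using base[OF sg] by auto
      next
        case (Suc m)
        show ?case
        proof (intro allI impI)
          fix xs ys
          assume h1: "xs 1 \<in> v ` S" and h2: "\<forall>l\<in>{2..k}. Suc m < l \<longrightarrow> xs l \<in> v ` I"
            and h3: "\<forall>l\<in>{k+1..n}. Suc m < l \<longrightarrow> ys l \<in> w ` J"
          consider (a) "Suc m \<in> {2..k}" | (b) "Suc m \<in> {k+1..n}" | (c) "Suc m \<notin> {2..k}" "Suc m \<notin> {k+1..n}"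
            by blast
          then show "br sg xs ys \<in> U"
          proof cases
            case a
            let ?T = "{x. br sg (xs(Suc m := x)) ys \<in> U}"
            have lin: "Vector_Spaces.linear scV scV (\<lambda>x. br sg (xs(Suc m := x)) ys)"
              using kmsg[OF sg] a by auto
            have Ts: "V.subspace ?T" using lin_vimage[OF lin Usub] by simp
            have "v ` I \<subseteq> ?T"
            proof
              fix x assume "x \<in> v ` I"
              then show "x \<in> ?T" using Suc.IH h1 h2 h3 a by auto
            qed
            then have "V.span (v ` I) \<subseteq> ?T" using V.span_minimal Ts by blast
            then have "br sg (xs(Suc m := xs (Suc m))) ys \<in> U" using vspan by blast
            thus ?thesis by simp
          next
            case b
            let ?T = "{y. br sg xs (ys(Suc m := y)) \<in> U}"
            have lin: "Vector_Spaces.linear scW scV (\<lambda>y. br sg xs (ys(Suc m := y)))"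
              using kmsg[OF sg] b by auto
            have Ts: "W.subspace ?T" using lin_vimage[OF lin Usub] by simp
            have "w ` J \<subseteq> ?T"
            proof
              fix y assume "y \<in> w ` J"
              then show "y \<in> ?T" using Suc.IH h1 h2 h3 b by auto
            qed
            then have "W.span (w ` J) \<subseteq> ?T" using W.span_minimal Ts by blast
            then have "br sg xs (ys(Suc m := ys (Suc m))) \<in> U" using wspan by blast
            thus ?thesis by simp
          next
            case c
            have "\<forall>l\<in>{2..k}. m < l \<longrightarrow> xs l \<in> v ` I"
              using h2 c by (metis Suc_lessI)
            moreover have "\<forall>l\<in>{k+1..n}. m < l \<longrightarrow> ys l \<in> w ` J"
              using h3 c by (metis Suc_lessI)
            ultimately show ?thesis using Suc.IH h1 by blast
          qed
        qed
      qed
      have ksub: "k_submodule scV n k br U"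
        unfolding k_submodule_def
      proof (intro conjI allI impI ballI)
        show "V.subspace U" by (rule Usub)
        fix sg u xs ys assume sg: "sg permutes {1..n}" and u: "u \<in> U"
        let ?T = "{x. br sg (xs(1 := x)) ys \<in> U}"
        have lin: "Vector_Spaces.linear scV scV (\<lambda>x. br sg (xs(1 := x)) ys)"
          using kmsg[OF sg] km by auto
        have Ts: "V.subspace ?T" using lin_vimage[OF lin Usub] by simp
        have "v ` S \<subseteq> ?T"
        proof
          fix x assume "x \<in> v ` S"
          then show "x \<in> ?T" using ind[OF sg, of n] km by auto
        qed
        then have "V.span (v ` S) \<subseteq> ?T" by (rule V.span_minimal[OF _ Ts])
        then have "U \<subseteq> ?T" by (simp only: U_def[symmetric])
        thus "br sg (xs(1 := u)) ys \<in> U" using u by auto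
      qed
      have "v i \<in> U" unfolding U_def using iS by (simp add: V.span_base)
      moreover have "v i \<noteq> 0" using vind iI V.dependent_zero by force
      ultimately have "U \<noteq> {0}" by auto
      moreover have "inherits_basis scV v I U"
        unfolding inherits_basis_def U_def using SI vind V.dependent_mono
        by (metis image_mono)
      ultimately have "U = UNIV" using minl ksub unfolding is_minimal_def by blast
      then have "i' \<in> S" using in_span[OF SI i'I] unfolding U_def by auto
      thus "connected_idx scV n k br v I w J i i'" unfolding S_def by auto
    qed
  next
    assume conn: "\<forall>i\<in>I. \<forall>i'\<in>I. connected_idx scV n k br v I w J i i'"
    show "is_minimal scV n k br v I" unfolding is_minimal_def
    proof (intro allI impI)
      fix U assume h: "k_submodule scV n k br U \<and> U \<noteq> {0} \<and> inherits_basis scV v I U"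
      have Us: "V.subspace U" and Ucl: "\<And>sg u xs ys. sg permutes {1..n} \<Longrightarrow> u \<in> U \<Longrightarrow> br sg (xs(1 := u)) ys \<in> U"
        using h unfolding k_submodule_def by auto
      obtain S where S: "S \<subseteq> I" "V.span (v ` S) = U" using h unfolding inherits_basis_def by auto
      have "S \<noteq> {}" using S h by auto
      then obtain i0 where i0: "i0 \<in> S" by auto
      have vi0: "v i0 \<in> U" using S i0 V.span_base by blast
      have step: "phi_idx scV n k br v I w A X Y \<subseteq> I \<and> (\<forall>a\<in>phi_idx scV n k br v I w A X Y. v a \<in> U)"
        if "A \<subseteq> I" "\<forall>a\<in>A. v a \<in> U" "valid_XY n k I J X Y" for A X Y
      proof
        show "phi_idx scV n k br v I w A X Y \<subseteq> I" unfolding phi_idx_def using mu_sub[of scV n k br v I w _ X Y] by blast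
        show "\<forall>a\<in>phi_idx scV n k br v I w A X Y. v a \<in> U"
        proof
          fix a assume "a \<in> phi_idx scV n k br v I w A X Y"
          then obtain i where i: "i \<in> A" "a \<in> mu_idx scV n k br v I w i X Y"
            unfolding phi_idx_def by auto
          have aI: "a \<in> I" by (rule subsetD[OF mu_sub[of scV n k br v I w i X Y] i(2)])
          have iI: "i \<in> I" using that(1) i(1) by blast
          have va: "v a \<in> V.span {br sg (xs(1 := v i)) ys | sg xs ys. sg permutes {1..n}}"
            by (rule mumul[rule_format, OF iI aI that(3) i(2)])
          have viU: "v i \<in> U" using that(2) i(1) by simp
          have sp: "{br sg (xs(1 := v i)) ys | sg xs ys. sg permutes {1..n}} \<subseteq> U"
            using Ucl[OF _ viU] by auto
          show "v a \<in> U" using V.span_minimal[OF sp Us] va by blast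
        qed
      qed
      have allI': "v i' \<in> U" if "i' \<in> I" for i'
      proof -
        have c: "connected_idx scV n k br v I w J i0 i'" using conn S i0 that by blast
        show ?thesis
        proof (cases "i0 = i'")
          case True thus ?thesis using vi0 by simp
        next
          case False
          then obtain seq where s: "\<forall>(X, Y)\<in>set seq. valid_XY n k I J X Y"
            "i' \<in> conn_sets scV n k br v I w {i0} seq"
            using c unfolding connected_idx_def by blast
          have "{i0} \<subseteq> I" using S i0 by auto
          from foldl_inv[of "{i0}" I "\<lambda>a. v a \<in> U", OF this _ step s(1)] vi0 s(2)
          show ?thesis by auto
        qed
      qed
      have "V.span (v ` I) \<subseteq> U" using allI' V.span_minimal Us by blast
      thus "U = UNIV" using vspan by auto
    qed
  qed
qed

end
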